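(* Let $A,B$ be abstract state spaces and let $\omega\in A\otimes_{\max}B$ be a state that is steering for its $B$-marginal $\omega^B$. Then $\hat\omega(A^*_+)=\mathrm{Face}(\omega^B)$, the smallest face of $B_+$ containing $\omega^B$.
   Context: An abstract state space is a pair $(A,u_A)$ where $A$ is a finite-dimensional real vector space with a closed, pointed, generating convex cone $A_+$, and $u_A$ is an interior point of the dual cone $A^*_+$. An effect on $A$ is $a\in A^*_+$ with $a\le u_A$; an observable on $A$ is a finite family of effects $\{a_i\}$ with $\sum_i a_i=u_A$. $A\otimes_{\max}B$ is the space of bilinear forms on $A^*\times B^*$ nonnegative on $A^*_+\times B^*_+$; a state is such a form with $\omega(u_A,u_B)=1$; $\hat\omega:A^*\to B$ is $\hat\omega(a)(b)=\omega(a,b)$ and $\omega^B=\hat\omega(u_A)$. An ensemble for $\beta\in B_+$ is a finite family $\beta_i\in B_+$ with $\sum_i\beta_i=\beta$. $\omega$ is steering for its $B$-marginal if for every ensemble $\{\beta_i\}$ for $\omega^B$ there is an observable $\{x_i\}$ on $A$ with $\hat\omega(x_i)=\beta_i$ for all $i$. A face of $B_+$ is a subcone $F_+$ such that $x,y\in B_+$, $x+y\in F_+$ imply $x,y\in F_+$. *)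

theory Defs
  imports "HOL-Analysis.Analysis"
begin

text \<open>A finite-dimensional real vector space is modelled as a Euclidean space type;
its dual space is identified with the space itself via the inner product
(a functional a acts on x by a \<bullet> x).\<close>

definition dual_cone :: "'a::euclidean_space set \<Rightarrow> 'a set" where
  "dual_cone K = {a. \<forall>x\<in>K. 0 \<le> a \<bullet> x}"

definition pointed_cone :: "'a::real_vector set \<Rightarrow> bool" where
  "pointed_cone K \<longleftrightarrow> K \<inter> uminus ` K = {0}"

definition generating_cone :: "'a::real_vector set \<Rightarrow> bool" where
  "generating_cone K \<longleftrightarrow> {x - y | x y. x \<in> K \<and> y \<in> K} = UNIV"

definition abstract_state_space :: "'a::euclidean_space set \<Rightarrow> 'a \<Rightarrow> bool" where
  "abstract_state_space K u \<longleftrightarrow>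
     closed K \<and> convex_cone K \<and> pointed_cone K \<and> generating_cone K \<and>
     u \<in> interior (dual_cone K)"

definition effect :: "'a::euclidean_space set \<Rightarrow> 'a \<Rightarrow> 'a \<Rightarrow> bool" where
  "effect K u a \<longleftrightarrow> a \<in> dual_cone K \<and> u - a \<in> dual_cone K"

definition observable :: "'a::euclidean_space set \<Rightarrow> 'a \<Rightarrow> nat set \<Rightarrow> (nat \<Rightarrow> 'a) \<Rightarrow> bool" where
  "observable K u I x \<longleftrightarrow> finite I \<and> (\<forall>i\<in>I. effect K u (x i)) \<and> (\<Sum>i\<in>I. x i) = u"

text \<open>Elements of A \<otimes>_max B: bilinear forms on A* \<times> B* nonnegative on A*_+ \<times> B*_+.\<close>
definition max_tensor :: "'a::euclidean_space set \<Rightarrow> 'b::euclidean_space set \<Rightarrow>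
    ('a \<Rightarrow> 'b \<Rightarrow> real) \<Rightarrow> bool" where
  "max_tensor KA KB \<omega> \<longleftrightarrow> bilinear \<omega> \<and>
     (\<forall>a\<in>dual_cone KA. \<forall>b\<in>dual_cone KB. 0 \<le> \<omega> a b)"

definition state_max :: "'a::euclidean_space set \<Rightarrow> 'a \<Rightarrow> 'b::euclidean_space set \<Rightarrow> 'b \<Rightarrow>
    ('a \<Rightarrow> 'b \<Rightarrow> real) \<Rightarrow> bool" where
  "state_max KA uA KB uB \<omega> \<longleftrightarrow> max_tensor KA KB \<omega> \<and> \<omega> uA uB = 1"

text \<open>\<omega>-hat: A* \<rightarrow> B (= B**), the vector representing b \<mapsto> \<omega> a b.\<close>
definition omega_hat :: "('a \<Rightarrow> 'b::euclidean_space \<Rightarrow> real) \<Rightarrow> 'a \<Rightarrow> 'b" where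
  "omega_hat \<omega> a = (\<Sum>b\<in>Basis. \<omega> a b *\<^sub>R b)"

definition ensemble :: "'b::euclidean_space set \<Rightarrow> 'b \<Rightarrow> nat set \<Rightarrow> (nat \<Rightarrow> 'b) \<Rightarrow> bool" where
  "ensemble KB \<beta> I \<beta>s \<longleftrightarrow> finite I \<and> (\<forall>i\<in>I. \<beta>s i \<in> KB) \<and> (\<Sum>i\<in>I. \<beta>s i) = \<beta>"

definition steering :: "'a::euclidean_space set \<Rightarrow> 'a \<Rightarrow> 'b::euclidean_space set \<Rightarrow>
    ('a \<Rightarrow> 'b \<Rightarrow> real) \<Rightarrow> bool" where
  "steering KA uA KB \<omega> \<longleftrightarrow>
     (\<forall>I \<beta>s. ensemble KB (omega_hat \<omega> uA) I \<beta>s \<longrightarrow>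
        (\<exists>x. observable KA uA I x \<and> (\<forall>i\<in>I. omega_hat \<omega> (x i) = \<beta>s i)))"

definition cone_face :: "'b::real_vector set \<Rightarrow> 'b set \<Rightarrow> bool" where
  "cone_face K F \<longleftrightarrow> convex_cone F \<and> F \<subseteq> K \<and>
     (\<forall>x\<in>K. \<forall>y\<in>K. x + y \<in> F \<longrightarrow> x \<in> F \<and> y \<in> F)"

definition Face :: "'b::real_vector set \<Rightarrow> 'b \<Rightarrow> 'b set" where
  "Face K \<beta> = \<Inter>{F. cone_face K F \<and> \<beta> \<in> F}"

end

theory Submission imports Defs begin

lemma bipolar:
  fixes K :: "'b::euclidean_space set"
  assumes "closed K" "convex_cone K" "\<And>a. a \<in> dual_cone K \<Longrightarrow> 0 \<le> a \<bullet> z"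
  shows "z \<in> K"
proof (rule ccontr)
  assume "z \<notin> K"
  have cv: "convex K" using assms(2) by (simp add: convex_cone_def)
  obtain a b where ab: "a \<bullet> z < b" "\<forall>x\<in>K. a \<bullet> x > b"
    using separating_hyperplane_closed_point[OF cv assms(1) \<open>z \<notin> K\<close>] by blast
  have K: "0 \<in> K" "\<And>x c. x \<in> K \<Longrightarrow> 0 \<le> c \<Longrightarrow> c *\<^sub>R x \<in> K"
    using assms(2) by (auto simp: convex_cone_iff)
  have b0: "b < 0" using ab(2) K(1) by force
  have "a \<in> dual_cone K"
    unfolding dual_cone_def
  proof (clarify, rule ccontr)
    fix x assume x: "x \<in> K" "\<not> 0 \<le> a \<bullet> x"
    define c where "c = b / (a \<bullet> x)"
    have c: "c \<ge> 0" using b0 x(2) by (simp add: c_def divide_nonpos_neg)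
    have "a \<bullet> (c *\<^sub>R x) = b" using x(2) by (simp add: c_def)
    with ab(2) K(2)[OF x(1) c] show False by force
  qed
  with assms(3) ab(1) b0 show False by force
qed

lemma inner_hat:
  assumes "bilinear \<omega>"
  shows "b \<bullet> omega_hat \<omega> a = \<omega> a (b::'b::euclidean_space)"
proof -
  have lin: "linear (\<omega> a)" using assms by (simp add: bilinear_def)
  have "b \<bullet> omega_hat \<omega> a = (\<Sum>i\<in>Basis. \<omega> a i * (b \<bullet> i))"
    by (simp add: omega_hat_def inner_sum_right mult.commute)
  also have "\<dots> = (\<Sum>i\<in>Basis. \<omega> a ((b \<bullet> i) *\<^sub>R i))"
    using lin by (simp add: linear_scale mult.commute)
  also have "\<dots> = \<omega> a (\<Sum>i\<in>Basis. (b \<bullet> i) *\<^sub>R i)"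
    using lin by (simp add: linear_sum)
  also have "\<dots> = \<omega> a b" by (simp add: euclidean_representation)
  finally show ?thesis .
qed

lemma hat_add:
  assumes "bilinear \<omega>"
  shows "omega_hat \<omega> (x + y) = omega_hat \<omega> x + omega_hat \<omega> y"
proof -
  have "\<And>b. \<omega> (x+y) b = \<omega> x b + \<omega> y b" using assms
    by (simp add: bilinear_ladd)
  then show ?thesis by (simp add: omega_hat_def scaleR_add_left sum.distrib)
qed

lemma hat_scale:
  assumes "bilinear \<omega>"
  shows "omega_hat \<omega> (c *\<^sub>R x) = c *\<^sub>R omega_hat \<omega> x"
proof -
  have "\<And>b. \<omega> (c *\<^sub>R x) b = c * \<omega> x b" using assms
    by (simp add: bilinear_lmul)
  then show ?thesis by (simp add: omega_hat_def scaleR_sum_right)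
qed

lemma hat_diff:
  assumes "bilinear \<omega>"
  shows "omega_hat \<omega> (x - y) = omega_hat \<omega> x - omega_hat \<omega> y"
  using hat_add[OF assms, of "x - y" y] by simp

lemma interior_step:
  fixes u :: "'a::euclidean_space"
  assumes "u \<in> interior S" "a \<in> S"
  shows "\<exists>t>0. u - t *\<^sub>R a \<in> S"
proof (cases "a = 0")
  case True then show ?thesis using assms interior_subset by (auto intro: exI[of _ 1])
next
  case False
  obtain e where e: "e > 0" "ball u e \<subseteq> S" using assms(1) by (meson mem_interior)
  define t where "t = e / (2 * norm a)"
  have t: "t > 0" using e False by (simp add: t_def)
  have "norm (t *\<^sub>R a) = e / 2" using False e by (simp add: t_def)
  then have "u - t *\<^sub>R a \<in> ball u e" using e by (simp add: dist_norm)
  then show ?thesis using t e by blast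
qed

theorem lemma5p2:
  fixes KA :: "'a::euclidean_space set" and uA :: 'a
    and KB :: "'b::euclidean_space set" and uB :: 'b
    and \<omega> :: "'a \<Rightarrow> 'b \<Rightarrow> real"
  assumes "abstract_state_space KA uA"
    and "abstract_state_space KB uB"
    and "state_max KA uA KB uB \<omega>"
    and "steering KA uA KB \<omega>"
  shows "omega_hat \<omega> ` dual_cone KA = Face KB (omega_hat \<omega> uA)"
proof -
  let ?h = "omega_hat \<omega>"
  let ?DA = "dual_cone KA"
  have bil: "bilinear \<omega>" and nn: "\<And>a b. a \<in> ?DA \<Longrightarrow> b \<in> dual_cone KB \<Longrightarrow> 0 \<le> \<omega> a b"
    using assms(3) by (auto simp: state_max_def max_tensor_def)
  have KBc: "closed KB" "convex_cone KB" using assms(2) by (auto simp: abstract_state_space_def)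
  have uint: "uA \<in> interior ?DA" using assms(1) by (simp add: abstract_state_space_def)
  have uA: "uA \<in> ?DA" using uint interior_subset by blast
  have DA0: "0 \<in> ?DA" by (simp add: dual_cone_def)
  have DAadd: "\<And>x y. x \<in> ?DA \<Longrightarrow> y \<in> ?DA \<Longrightarrow> x + y \<in> ?DA"
    by (simp add: dual_cone_def inner_add_left)
  have DAsc: "\<And>x c. x \<in> ?DA \<Longrightarrow> 0 \<le> c \<Longrightarrow> c *\<^sub>R x \<in> ?DA"
    by (simp add: dual_cone_def)
  have pos: "\<And>a. a \<in> ?DA \<Longrightarrow> ?h a \<in> KB"
    by (rule bipolar[OF KBc]) (simp add: inner_hat[OF bil] nn)
  have KBsc: "\<And>x c. x \<in> KB \<Longrightarrow> 0 \<le> c \<Longrightarrow> c *\<^sub>R x \<in> KB"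
    and KBadd: "\<And>x y. x \<in> KB \<Longrightarrow> y \<in> KB \<Longrightarrow> x + y \<in> KB"
    using KBc(2) by (auto simp: convex_cone_iff)
  have split: "\<exists>t>0. uA - t *\<^sub>R a \<in> ?DA" if "a \<in> ?DA" for a
    using interior_step[OF uint that] .
  have sub: "?h ` ?DA \<subseteq> F" if F: "cone_face KB F" "?h uA \<in> F" for F
  proof
    fix z assume "z \<in> ?h ` ?DA"
    then obtain a where a: "a \<in> ?DA" "z = ?h a" by blast
    obtain t where t: "t > 0" "uA - t *\<^sub>R a \<in> ?DA" using split[OF a(1)] by blast
    have eq: "?h uA = t *\<^sub>R ?h a + ?h (uA - t *\<^sub>R a)"
      by (simp add: hat_diff[OF bil] hat_scale[OF bil])
    have fc: "\<forall>x\<in>KB. \<forall>y\<in>KB. x + y \<in> F \<longrightarrow> x \<in> F \<and> y \<in> F"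
      using F(1) unfolding cone_face_def by blast
    have "t *\<^sub>R ?h a \<in> KB" using KBsc[OF pos[OF a(1)]] t(1) by simp
    then have "t *\<^sub>R ?h a \<in> F"
      using fc[rule_format, OF \<open>t *\<^sub>R ?h a \<in> KB\<close> pos[OF t(2)]] F(2) eq by simp
    then have "inverse t *\<^sub>R (t *\<^sub>R ?h a) \<in> F"
    proof -
      have "convex_cone F" using F(1) unfolding cone_face_def by blast
      then have "\<forall>x\<in>F. \<forall>c\<ge>0. c *\<^sub>R x \<in> F" unfolding convex_cone_iff by blast
      then show ?thesis using \<open>t *\<^sub>R ?h a \<in> F\<close> t(1) by (meson inverse_nonnegative_iff_nonnegative less_imp_le)
    qed
    then show "z \<in> F" using t(1) a(2) by simp
  qed
  have face: "cone_face KB (?h ` ?DA)"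
    unfolding cone_face_def
  proof (intro conjI ballI impI)
    show "convex_cone (?h ` ?DA)"
      unfolding convex_cone_iff
    proof (intro conjI ballI allI impI)
      show "0 \<in> ?h ` ?DA" 
      proof (rule image_eqI[OF _ DA0])
        show "0 = ?h 0" using hat_scale[OF bil, of 0 0] by simp
      qed
    next
      fix x y assume "x \<in> ?h ` ?DA" "y \<in> ?h ` ?DA"
      then obtain a b where "a \<in> ?DA" "b \<in> ?DA" "x = ?h a" "y = ?h b" by blast
      then show "x + y \<in> ?h ` ?DA" 
        by (intro image_eqI[OF _ DAadd[of a b]]) (simp_all add: hat_add[OF bil])
    next
      fix x and c :: real assume "x \<in> ?h ` ?DA" "0 \<le> c"
      then obtain a where "a \<in> ?DA" "x = ?h a" by blast
      then show "c *\<^sub>R x \<in> ?h ` ?DA" 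
        using \<open>0 \<le> c\<close> by (intro image_eqI[OF _ DAsc[of a c]]) (simp_all add: hat_scale[OF bil])
    qed
  next
    show "?h ` ?DA \<subseteq> KB" using pos by blast
  next
    fix x y assume xy: "x \<in> KB" "y \<in> KB" "x + y \<in> ?h ` ?DA"
    then obtain a where a: "a \<in> ?DA" "x + y = ?h a" by blast
    obtain t where t: "t > 0" "uA - t *\<^sub>R a \<in> ?DA" using split[OF a(1)] by blast
    define \<beta>s where "\<beta>s = (\<lambda>i::nat. if i = 0 then t *\<^sub>R x else if i = 1 then t *\<^sub>R y
                                    else ?h (uA - t *\<^sub>R a))"
    have ens: "ensemble KB (?h uA) {0,1,2} \<beta>s"
      unfolding ensemble_def
    proof (intro conjI ballI)
      show "finite {0::nat,1,2}" by simp
    next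
      fix i assume "i \<in> {0::nat,1,2}"
      then show "\<beta>s i \<in> KB" using KBsc[OF xy(1)] KBsc[OF xy(2)] t pos[OF t(2)] by (auto simp: \<beta>s_def)
    next
      have "(\<Sum>i\<in>{0::nat,1,2}. \<beta>s i) = t *\<^sub>R (x + y) + ?h (uA - t *\<^sub>R a)"
        by (simp add: \<beta>s_def scaleR_add_right)
      also have "\<dots> = ?h uA" using a(2) by (simp add: hat_diff[OF bil] hat_scale[OF bil])
      finally show "(\<Sum>i\<in>{0::nat,1,2}. \<beta>s i) = ?h uA" .
    qed
    obtain e where e: "observable KA uA {0,1,2} e" "\<forall>i\<in>{0,1,2}. ?h (e i) = \<beta>s i"
      using assms(4)[unfolded steering_def, rule_format, OF ens] by blast
    have e0: "e 0 \<in> ?DA" "e 1 \<in> ?DA" using e(1) by (auto simp: observable_def effect_def)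
    have "?h (inverse t *\<^sub>R e 0) = x" using e(2) t(1) by (simp add: hat_scale[OF bil] \<beta>s_def)
    moreover have "?h (inverse t *\<^sub>R e 1) = y" using e(2) t(1) by (simp add: hat_scale[OF bil] \<beta>s_def)
    moreover have "inverse t *\<^sub>R e 0 \<in> ?DA" "inverse t *\<^sub>R e 1 \<in> ?DA"
      using e0 DAsc t(1) by simp_all
    ultimately show "x \<in> ?h ` ?DA" "y \<in> ?h ` ?DA" by (blast intro: rev_image_eqI)+
  qed
  have "Face KB (?h uA) \<subseteq> ?h ` ?DA"
    unfolding Face_def
  proof (rule Inter_lower, simp)
    show "cone_face KB (?h ` ?DA) \<and> ?h uA \<in> ?h ` ?DA" using face uA by simp
  qed
  moreover have "?h ` ?DA \<subseteq> Face KB (?h uA)"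
    unfolding Face_def by (rule Inter_greatest) (use sub in blast)
  ultimately show ?thesis by blast
qed

end
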